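(* Let $\lambda,a\in\mathbb{R}^n$ with $\|\lambda\|=\|a\|=1$ and $d\in\mathbb{R}^m$ with $\|d\|\le1$. For $y\in\mathbb{R}^m$ let $\phi_\lambda(y)=\max_x\{\lambda^\mathsf{T} x:\|x\|\le\|y\|,\ a^\mathsf{T} x+d^\mathsf{T} y\le0\}$. Then $$\phi_\lambda(y)=\begin{cases}\|y\|, & \text{if } \lambda^\mathsf{T} a\,\|y\|+d^\mathsf{T} y\le0,\\ \sqrt{(\|y\|^2-(d^\mathsf{T} y)^2)(1-(\lambda^\mathsf{T} a)^2)}-d^\mathsf{T} y\,\lambda^\mathsf{T} a, & \text{otherwise.}\end{cases}$$ Furthermore, $\phi_\lambda$ is sublinear (convex and positively homogeneous), and: if $\|d\|=1$ and $m>1$, then $\phi_\lambda$ is differentiable on $\mathbb{R}^m\setminus d\mathbb{R}_+$; otherwise $\phi_\lambda$ is differentiable on $\mathbb{R}^m\setminus\{0\}$.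
   Context: $\|\cdot\|$ is the Euclidean norm; $d\mathbb{R}_+=\{td:t\ge0\}$. *)

theory Defs
  imports "HOL-Analysis.Analysis"
begin

text \<open>The value function phi_lambda(y) = max { lam . x : norm x <= norm y, a . x + d . y <= 0 }.
  The maximum is taken as the supremum of the (compact, nonempty) feasible value set.\<close>
definition phi :: "real ^ 'n \<Rightarrow> real ^ 'n \<Rightarrow> real ^ 'm \<Rightarrow> real ^ 'm \<Rightarrow> real" where
  "phi lam a d y = Sup ((\<lambda>x. lam \<bullet> x) ` {x. norm x \<le> norm y \<and> a \<bullet> x + d \<bullet> y \<le> 0})"

end

theory Submission
  imports Defs
begin

definition V :: "real \<Rightarrow> real \<Rightarrow> real \<Rightarrow> real" where
  "V s R C = (if s * R + C \<le> 0 then R else sqrt ((R ^ 2 - C ^ 2) * (1 - s ^ 2)) - C * s)"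

lemma aux_mq:
  fixes s R q :: real
  assumes "s^2 \<le> 1" "q < s * R" "q^2 \<le> R^2" "R \<ge> 0"
  shows "sqrt (1 - s^2) * q \<le> s * sqrt (R^2 - q^2)"
proof -
  let ?m = "sqrt (1 - s^2)" and ?b = "sqrt (R^2 - q^2)"
  have m0: "?m \<ge> 0" and b0: "?b \<ge> 0" using assms by auto
  have msq: "?m^2 = 1 - s^2" by (rule real_sqrt_pow2) (use assms in auto)
  have bsq: "?b^2 = R^2 - q^2" by (rule real_sqrt_pow2) (use assms in auto)
  show ?thesis
  proof (cases "s \<ge> 0")
    case True
    show ?thesis
    proof (cases "q \<le> 0")
      case True
      have "?m * q \<le> 0" using m0 True by (simp add: mult_nonneg_nonpos)
      moreover have "s * ?b \<ge> 0" using b0 \<open>s \<ge> 0\<close> by simp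
      ultimately show ?thesis by linarith
    next
      case False
      have "q^2 \<le> (s*R)^2" using False assms(2) by (intro power_mono) auto
      then have "(?m * q)^2 \<le> (s * ?b)^2" unfolding power_mult_distrib msq bsq
        by (simp add: algebra_simps power_mult_distrib)
      moreover have "s * ?b \<ge> 0" using True b0 by simp
      ultimately show ?thesis by (rule power2_le_imp_le)
    qed
  next
    case False
    have "s * R \<le> 0" using False assms(4) by (simp add: mult_nonpos_nonneg)
    then have "(s*R)^2 \<le> q^2" using assms(2)
    proof -
      have "\<bar>s*R\<bar> \<le> \<bar>q\<bar>" using \<open>s*R \<le> 0\<close> assms(2) by linarith
      then show ?thesis by (simp add: abs_le_square_iff)
    qed
    then have "(s * ?b)^2 \<le> (?m * q)^2" unfolding power_mult_distrib msq bsq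
      by (simp add: algebra_simps power_mult_distrib)
    moreover have "?m * q \<le> 0" using m0 \<open>s*R \<le> 0\<close> assms(2) by (simp add: mult_nonneg_nonpos)
    moreover have "s * ?b \<le> 0" using False b0 by (simp add: mult_nonpos_nonneg)
    ultimately show ?thesis using abs_le_square_iff[of "s * ?b" "?m * q"] by linarith
  qed
qed

lemma scalar_bound:
  fixes s R C al :: real
  assumes "s^2 \<le> 1" "al^2 \<le> R^2" "al \<le> - C" "C^2 \<le> R^2" "R \<ge> 0"
  shows "s * al + sqrt (1 - s^2) * sqrt (R^2 - al^2) \<le> V s R C"
proof (cases "s * R + C \<le> 0")
  case True
  let ?m = "sqrt (1 - s^2)" and ?b = "sqrt (R^2 - al^2)"
  have msq: "?m^2 = 1 - s^2" by (rule real_sqrt_pow2) (use assms in auto)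
  have bsq: "?b^2 = R^2 - al^2" by (rule real_sqrt_pow2) (use assms in auto)
  have "(s * al + ?m * ?b)^2 = (s^2 + ?m^2) * (al^2 + ?b^2) - (s * ?b - ?m * al)^2"
    by (simp add: power2_eq_square algebra_simps)
  also have "\<dots> \<le> (s^2 + ?m^2) * (al^2 + ?b^2)" by simp
  finally have "(s * al + ?m * ?b)^2 \<le> (s^2 + ?m^2) * (al^2 + ?b^2)" .
  also have "\<dots> = R^2" using msq bsq by simp
  finally have "s * al + ?m * ?b \<le> R"
    using assms(5) by (rule power2_le_imp_le)
  then show ?thesis using True by (simp add: V_def)
next
  case False
  define p where "p = - C"
  let ?m = "sqrt (1 - s^2)" and ?b = "sqrt (R^2 - al^2)" and ?g = "sqrt (R^2 - p^2)"
  have m0: "?m \<ge> 0" and b0: "?b \<ge> 0" and g0: "?g \<ge> 0" using assms p_def by auto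
  have bsq: "?b^2 = R^2 - al^2" by (rule real_sqrt_pow2) (use assms in auto)
  have gsq: "?g^2 = R^2 - p^2" by (rule real_sqrt_pow2) (use assms p_def in auto)
  have pl: "p < s * R" using False p_def by simp
  have ap: "al \<le> p" using assms p_def by simp
  have h1: "?m * p \<le> s * ?g" using aux_mq[OF assms(1) pl] assms p_def by simp
  have h2: "?m * al \<le> s * ?b" using aux_mq[OF assms(1) _ assms(2) assms(5)] ap pl by simp
  have key: "(?b + ?g) * (s * (al - p) + ?m * (?b - ?g)) = (p - al) * (?m * (p + al) - s * (?b + ?g))"
  proof -
    have "(?b + ?g) * (?b - ?g) = ?b^2 - ?g^2" by (simp add: power2_eq_square algebra_simps)
    also have "\<dots> = (p - al) * (p + al)" using bsq gsq by (simp add: power2_eq_square algebra_simps)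
    finally have e: "(?b + ?g) * (?b - ?g) = (p - al) * (p + al)" .
    have "(?b + ?g) * (s * (al - p) + ?m * (?b - ?g)) = (?b + ?g) * s * (al - p) + ?m * ((?b + ?g) * (?b - ?g))"
      by (simp add: algebra_simps)
    also have "\<dots> = (p - al) * (?m * (p + al) - s * (?b + ?g))" unfolding e by (simp add: algebra_simps)
    finally show ?thesis .
  qed
  have rhsle: "(p - al) * (?m * (p + al) - s * (?b + ?g)) \<le> 0"
    using ap h1 h2 by (intro mult_nonneg_nonpos) (auto simp: algebra_simps)
  have main: "s * (al - p) + ?m * (?b - ?g) \<le> 0"
  proof (cases "?b + ?g > 0")
    case True
    have "(?b + ?g) * (s * (al - p) + ?m * (?b - ?g)) \<le> 0" using key rhsle by simp
    then show ?thesis using True by (simp add: mult_le_0_iff)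
  next
    case False
    then have "?b = 0" "?g = 0" using b0 g0 by linarith+
    then have "al^2 = R^2" "p^2 = R^2" using bsq gsq by simp_all
    then have "al = p \<or> (al = -R \<and> p = R)" using ap assms(5)
      by (auto simp: power2_eq_iff)
    moreover have "s \<le> 1" using assms(1) by (simp add: abs_square_le_1)
    then have "s * R \<le> 1 * R" using assms(5) by (intro mult_right_mono)
    ultimately show ?thesis using pl assms(5) \<open>?b = 0\<close> \<open>?g = 0\<close>
      by auto
  qed
  have "sqrt ((R ^ 2 - C ^ 2) * (1 - s ^ 2)) = ?g * ?m" using p_def by (simp add: real_sqrt_mult)
  then show ?thesis using False main p_def by (simp add: V_def algebra_simps)
qed


lemma absle_sq: "\<bar>x::real\<bar> \<le> R \<Longrightarrow> x^2 \<le> R^2"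
  by (metis abs_le_square_iff abs_of_nonneg abs_ge_zero order_trans)

lemma inner_self_1: "norm (a::'a::real_inner) = 1 \<Longrightarrow> a \<bullet> a = 1"
  by (metis norm_eq_sqrt_inner real_sqrt_eq_1_iff)

lemma s_sq_le1:
  fixes lam a :: "'a::real_inner"
  assumes "norm lam = 1" "norm a = 1"
  shows "(lam \<bullet> a)^2 \<le> 1"
proof -
  have "\<bar>lam \<bullet> a\<bar> \<le> 1" using Cauchy_Schwarz_ineq2[of lam a] assms by simp
  then show ?thesis by (simp add: abs_square_le_1)
qed

lemma vec_bound:
  fixes lam a x :: "'a::real_inner"
  assumes l1: "norm lam = 1" and a1: "norm a = 1" and xR: "norm x \<le> R" and hc: "a \<bullet> x + C \<le> 0"
    and CR: "\<bar>C\<bar> \<le> R"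
  shows "lam \<bullet> x \<le> V (lam \<bullet> a) R C"
proof -
  define s where "s = lam \<bullet> a"
  define al where "al = a \<bullet> x"
  define mu where "mu = lam - s *\<^sub>R a"
  define z where "z = x - al *\<^sub>R a"
  have aa: "a \<bullet> a = 1" using a1 by (rule inner_self_1)
  have ll: "lam \<bullet> lam = 1" using l1 by (rule inner_self_1)
  have e1: "lam \<bullet> x = s * al + mu \<bullet> z"
    unfolding mu_def z_def using aa
    by (simp add: inner_diff_left inner_diff_right s_def al_def inner_commute algebra_simps)
  have n1: "(norm mu)^2 = 1 - s^2"
    unfolding power2_norm_eq_inner mu_def using aa ll
    by (simp add: inner_diff_left inner_diff_right s_def inner_commute algebra_simps power2_eq_square)
  have n2: "(norm z)^2 = (norm x)^2 - al^2"
    unfolding power2_norm_eq_inner z_def using aa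
    by (simp add: inner_diff_left inner_diff_right al_def inner_commute algebra_simps power2_eq_square)
  have s1: "s^2 \<le> 1" unfolding s_def using s_sq_le1[OF l1 a1] .
  have R0: "R \<ge> 0" using CR by linarith
  have "\<bar>al\<bar> \<le> R" using Cauchy_Schwarz_ineq2[of a x] a1 xR al_def by simp
  then have alR: "al^2 \<le> R^2" by (rule absle_sq)
  have CR2: "C^2 \<le> R^2" using CR by (rule absle_sq)
  have nm: "norm mu = sqrt (1 - s^2)" using n1 by (metis norm_ge_zero real_sqrt_unique)
  have nz: "norm z = sqrt ((norm x)^2 - al^2)" using n2 by (metis norm_ge_zero real_sqrt_unique)
  have "(norm x)^2 \<le> R^2" using xR by (simp add: power_mono)
  then have nz2: "norm z \<le> sqrt (R^2 - al^2)" unfolding nz by (simp add: real_sqrt_le_mono)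
  have "mu \<bullet> z \<le> norm mu * norm z" by (rule norm_cauchy_schwarz)
  also have "\<dots> \<le> sqrt (1 - s^2) * sqrt (R^2 - al^2)" unfolding nm
    using nz2 s1 by (intro mult_left_mono) auto
  finally have "lam \<bullet> x \<le> s * al + sqrt (1 - s^2) * sqrt (R^2 - al^2)" using e1 by simp
  also have "\<dots> \<le> V s R C" using scalar_bound[OF s1 alR _ CR2 R0] hc al_def by simp
  finally show ?thesis unfolding s_def .
qed

lemma vec_attain:
  fixes lam a :: "'a::real_inner"
  assumes l1: "norm lam = 1" and a1: "norm a = 1" and CR: "\<bar>C\<bar> \<le> R"
  shows "\<exists>x. norm x \<le> R \<and> a \<bullet> x + C \<le> 0 \<and> lam \<bullet> x = V (lam \<bullet> a) R C"
proof -
  define s where "s = lam \<bullet> a"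
  have aa: "a \<bullet> a = 1" using a1 by (rule inner_self_1)
  have ll: "lam \<bullet> lam = 1" using l1 by (rule inner_self_1)
  have s1: "s^2 \<le> 1" unfolding s_def using s_sq_le1[OF l1 a1] .
  have R0: "R \<ge> 0" using CR by linarith
  show ?thesis
  proof (cases "s * R + C \<le> 0")
    case True
    show ?thesis
      by (rule exI[of _ "R *\<^sub>R lam"]) (use True R0 l1 ll in \<open>simp add: V_def s_def inner_commute mult.commute\<close>)
  next
    case False
    show ?thesis
    proof (cases "s^2 = 1")
      case True
      show ?thesis
        by (rule exI[of _ "(-C) *\<^sub>R a"]) (use False True CR a1 aa in \<open>simp add: V_def s_def inner_commute\<close>)
    next
      case s2: False
      define mu where "mu = lam - s *\<^sub>R a"
      define m where "m = sqrt (1 - s^2)"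
      define g where "g = sqrt (R^2 - C^2)"
      have m0: "m > 0" using s1 s2 m_def by simp
      have msq: "m^2 = 1 - s^2" using s1 m_def by simp
      have CR2: "C^2 \<le> R^2" using CR by (rule absle_sq)
      have gsq: "g^2 = R^2 - C^2" using CR2 g_def by simp
      have amu: "a \<bullet> mu = 0" unfolding mu_def using aa
        by (simp add: inner_diff_right s_def inner_commute)
      have lmu: "lam \<bullet> mu = 1 - s^2" unfolding mu_def using ll
        by (simp add: inner_diff_right s_def inner_commute power2_eq_square)
      have mumu: "mu \<bullet> mu = 1 - s^2" unfolding mu_def using ll aa
        by (simp add: inner_diff_right inner_diff_left s_def inner_commute power2_eq_square)
      define x where "x = (-C) *\<^sub>R a + (g / m) *\<^sub>R mu"
      have "x \<bullet> x = C^2 + (g/m)^2 * (1 - s^2)"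
      proof -
        have amu': "mu \<bullet> a = 0" using amu by (simp add: inner_commute)
        show ?thesis unfolding x_def using aa amu amu' mumu
          by (simp add: inner_add_left inner_add_right inner_diff_left inner_diff_right power2_eq_square)
      qed
      also have "\<dots> = C^2 + g^2" unfolding msq[symmetric] using m0 by (simp add: power_divide)
      also have "\<dots> = R^2" using gsq by simp
      finally have "(norm x)^2 = R^2" by (simp add: power2_norm_eq_inner)
      then have nx: "norm x = R" using R0 by (metis norm_ge_zero power2_eq_iff_nonneg)
      have ax: "a \<bullet> x + C = 0" unfolding x_def using aa amu by (simp add: inner_add_right inner_diff_right)
      have "lam \<bullet> x = -C * s + (g/m) * (1 - s^2)" unfolding x_def using lmu
        by (simp add: inner_add_right inner_diff_right s_def)
      also have "\<dots> = g * m - C * s" unfolding msq[symmetric] using m0 by (simp add: power2_eq_square)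
      also have "\<dots> = V s R C" using False by (simp add: V_def g_def m_def real_sqrt_mult)
      finally show ?thesis using nx ax s_def by auto
    qed
  qed
qed


lemma V_homog:
  assumes "t > 0"
  shows "V s (t * R) (t * C) = t * V s R C"
proof -
  have c: "(s * (t * R) + t * C \<le> 0) = (s * R + C \<le> 0)"
  proof -
    have "s * (t * R) + t * C = t * (s * R + C)" by (simp add: algebra_simps)
    then show ?thesis using assms by (simp add: mult_le_0_iff)
  qed
  have "((t * R)^2 - (t * C)^2) * (1 - s^2) = t^2 * ((R^2 - C^2) * (1 - s^2))"
    by (simp add: power_mult_distrib algebra_simps)
  then have "sqrt (((t * R)^2 - (t * C)^2) * (1 - s^2)) = sqrt (t^2) * sqrt ((R^2 - C^2) * (1 - s^2))"
    by (simp only: real_sqrt_mult)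
  then have "sqrt (((t * R)^2 - (t * C)^2) * (1 - s^2)) = t * sqrt ((R^2 - C^2) * (1 - s^2))"
    using assms by simp
  then show ?thesis unfolding V_def c by (simp add: algebra_simps)
qed

lemma V_scale:
  assumes "r > 0"
  shows "r * V (c / r) 1 s = V s r c"
proof -
  have c: "(c / r * 1 + s \<le> 0) = (s * r + c \<le> 0)"
  proof -
    have "c / r * 1 + s = (s * r + c) / r" using assms by (simp add: field_simps)
    then show ?thesis using assms by (simp add: divide_le_0_iff)
  qed
  have "r^2 * ((1 - s^2) * (1 - (c / r)^2)) = (r^2 - c^2) * (1 - s^2)"
    using assms by (simp add: field_simps power2_eq_square)
  then have "r * sqrt ((1 - s^2) * (1 - (c / r)^2)) = sqrt ((r^2 - c^2) * (1 - s^2))"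
    using assms by (metis abs_of_pos real_sqrt_abs real_sqrt_mult)
  moreover have "r * (s * (c / r)) = c * s" using assms by simp
  ultimately show ?thesis unfolding V_def c
    by (simp add: right_diff_distrib)
qed

lemma V_zero: "V s 0 0 = 0"
  by (simp add: V_def)

lemma subgrad:
  fixes d y :: "'b::real_inner"
  assumes d1: "norm d \<le> 1" and s1: "s^2 \<le> 1" and y0: "y \<noteq> 0"
  shows "\<exists>u. u \<bullet> y = V s (norm y) (d \<bullet> y) \<and> (\<forall>y'. u \<bullet> y' \<le> V s (norm y') (d \<bullet> y'))"
proof -
  define dt where "dt = (d, sqrt (1 - (norm d)^2))"
  have "(norm d)^2 \<le> 1" using d1 by (simp add: abs_square_le_1)
  then have ndt: "norm dt = 1" unfolding dt_def by (simp add: norm_Pair)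
  define yh where "yh = (\<lambda>y::'b. (y /\<^sub>R norm y, 0::real))"
  have nyh: "norm (yh v) = 1" if "v \<noteq> 0" for v using that by (simp add: yh_def norm_Pair)
  have yhd: "yh v \<bullet> dt = (d \<bullet> v) / norm v" for v
    by (simp add: yh_def dt_def inner_Pair inner_commute divide_inverse mult.commute)
  have yhu: "norm v * (yh v \<bullet> w) = v \<bullet> fst w" if "v \<noteq> 0" for v w
    using that by (cases w) (simp add: yh_def inner_Pair)
  have sabs: "\<bar>s\<bar> \<le> 1" using s1 by (simp add: abs_square_le_1)
  obtain w where w1: "norm w \<le> 1" and w2: "dt \<bullet> w + s \<le> 0" and w3: "yh y \<bullet> w = V (yh y \<bullet> dt) 1 s"
    using vec_attain[OF nyh[OF y0] ndt sabs] by blast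
  show ?thesis
  proof (intro exI conjI allI)
    have "fst w \<bullet> y = norm y * (yh y \<bullet> w)" using yhu[OF y0] by (simp add: inner_commute)
    also have "\<dots> = V s (norm y) (d \<bullet> y)" unfolding w3 yhd using y0 by (simp add: V_scale)
    finally show "fst w \<bullet> y = V s (norm y) (d \<bullet> y)" .
  next
    fix y' :: 'b
    show "fst w \<bullet> y' \<le> V s (norm y') (d \<bullet> y')"
    proof (cases "y' = 0")
      case True then show ?thesis by (simp add: V_zero)
    next
      case False
      have b: "yh y' \<bullet> w \<le> V (yh y' \<bullet> dt) 1 s"
        using vec_bound[OF nyh[OF False] ndt w1 w2 sabs] .
      have "fst w \<bullet> y' = norm y' * (yh y' \<bullet> w)" using yhu[OF False] by (simp add: inner_commute)
      also have "\<dots> \<le> norm y' * V (yh y' \<bullet> dt) 1 s" using b by (simp add: mult_left_mono)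
      also have "\<dots> = V s (norm y') (d \<bullet> y')" unfolding yhd using False by (simp add: V_scale)
      finally show ?thesis .
    qed
  qed
qed

lemma phi_eq:
  fixes lam a :: "real ^ 'n" and d :: "real ^ 'm"
  assumes "norm lam = 1" and "norm a = 1" and "norm d \<le> 1"
  shows "phi lam a d y = V (lam \<bullet> a) (norm y) (d \<bullet> y)"
proof -
  have "\<bar>d \<bullet> y\<bar> \<le> norm d * norm y" by (rule Cauchy_Schwarz_ineq2)
  also have "\<dots> \<le> norm y" using assms(3) by (simp add: mult_left_le_one_le)
  finally have CR: "\<bar>d \<bullet> y\<bar> \<le> norm y" .
  obtain x where x: "norm x \<le> norm y" "a \<bullet> x + d \<bullet> y \<le> 0" "lam \<bullet> x = V (lam \<bullet> a) (norm y) (d \<bullet> y)"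
    using vec_attain[OF assms(1,2) CR] by blast
  show ?thesis unfolding phi_def
  proof (rule cSup_eq_maximum)
    show "V (lam \<bullet> a) (norm y) (d \<bullet> y) \<in> (\<lambda>x. lam \<bullet> x) ` {x. norm x \<le> norm y \<and> a \<bullet> x + d \<bullet> y \<le> 0}"
      using x by (auto intro!: image_eqI[of _ _ x])
  next
    fix v assume "v \<in> (\<lambda>x. lam \<bullet> x) ` {x. norm x \<le> norm y \<and> a \<bullet> x + d \<bullet> y \<le> 0}"
    then obtain x' where "v = lam \<bullet> x'" "norm x' \<le> norm y" "a \<bullet> x' + d \<bullet> y \<le> 0" by auto
    then show "v \<le> V (lam \<bullet> a) (norm y) (d \<bullet> y)" using vec_bound[OF assms(1,2) _ _ CR] by auto
  qed
qed

lemma W_convex: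
  fixes d :: "real ^ 'm"
  assumes d1: "norm d \<le> 1" and s1: "s^2 \<le> 1"
  shows "convex_on UNIV (\<lambda>y. V s (norm y) (d \<bullet> y))"
proof -
  have sg: "\<exists>u. u \<bullet> y = V s (norm y) (d \<bullet> y) \<and> (\<forall>y'. u \<bullet> y' \<le> V s (norm y') (d \<bullet> y'))" for y
  proof (cases "y = 0")
    case False then show ?thesis using subgrad[OF d1 s1] by blast
  next
    case True
    have "(1::real^'m) \<noteq> 0" by (metis one_index zero_index zero_neq_one)
    then obtain u where "\<forall>y'. u \<bullet> y' \<le> V s (norm y') (d \<bullet> y')" using subgrad[OF d1 s1] by blast
    then show ?thesis using True by (auto simp: V_zero)
  qed
  show ?thesis unfolding convex_on_def
  proof (intro conjI ballI allI impI)
    fix x y :: "real^'m" and u v :: real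
    assume uv: "u \<ge> 0" "v \<ge> 0" "u + v = 1"
    obtain g where g1: "g \<bullet> (u *\<^sub>R x + v *\<^sub>R y) = V s (norm (u *\<^sub>R x + v *\<^sub>R y)) (d \<bullet> (u *\<^sub>R x + v *\<^sub>R y))"
      and g2: "\<forall>y'. g \<bullet> y' \<le> V s (norm y') (d \<bullet> y')" using sg by blast
    have "g \<bullet> (u *\<^sub>R x + v *\<^sub>R y) = u * (g \<bullet> x) + v * (g \<bullet> y)" by (simp add: inner_add_right)
    also have "\<dots> \<le> u * V s (norm x) (d \<bullet> x) + v * V s (norm y) (d \<bullet> y)"
      using g2 uv by (intro add_mono mult_left_mono) auto
    finally show "V s (norm (u *\<^sub>R x + v *\<^sub>R y)) (d \<bullet> (u *\<^sub>R x + v *\<^sub>R y))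
        \<le> u * V s (norm x) (d \<bullet> x) + v * V s (norm y) (d \<bullet> y)" using g1 by simp
  qed simp
qed


lemma squeeze_deriv:
  fixes f L U :: "'a::real_normed_vector \<Rightarrow> real"
  assumes dL: "(L has_derivative D) (at x)" and dU: "(U has_derivative D) (at x)"
    and ev: "eventually (\<lambda>y. L y \<le> f y \<and> f y \<le> U y) (at x)" and Lx: "L x = f x" and Ux: "U x = f x"
  shows "(f has_derivative D) (at x)"
proof -
  from dL have bl: "bounded_linear D"
    and tL: "((\<lambda>y. ((L y - L x) - D (y - x)) /\<^sub>R norm (y - x)) \<longlongrightarrow> 0) (at x)"
    by (simp_all add: has_derivative_at_within)
  from dU have tU: "((\<lambda>y. ((U y - U x) - D (y - x)) /\<^sub>R norm (y - x)) \<longlongrightarrow> 0) (at x)"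
    by (simp_all add: has_derivative_at_within)
  show ?thesis unfolding has_derivative_at_within
  proof (intro conjI bl)
    show "((\<lambda>y. ((f y - f x) - D (y - x)) /\<^sub>R norm (y - x)) \<longlongrightarrow> 0) (at x)"
    proof (rule real_tendsto_sandwich[OF _ _ tL tU])
      show "eventually (\<lambda>y. ((L y - L x) - D (y - x)) /\<^sub>R norm (y - x) \<le> ((f y - f x) - D (y - x)) /\<^sub>R norm (y - x)) (at x)"
        using ev by eventually_elim (auto simp: Lx intro!: mult_left_mono)
      show "eventually (\<lambda>y. ((f y - f x) - D (y - x)) /\<^sub>R norm (y - x) \<le> ((U y - U x) - D (y - x)) /\<^sub>R norm (y - x)) (at x)"
        using ev by eventually_elim (auto simp: Ux intro!: mult_left_mono)
    qed
  qed
qed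

lemma CS_eq:
  fixes d y :: "'a::real_inner"
  assumes d1: "norm d \<le> 1" and dy: "d \<bullet> y = k * norm y" and k1: "k^2 = 1"
  shows "y = (k * norm y) *\<^sub>R d"
proof -
  let ?t = "k * norm y"
  have "(y - ?t *\<^sub>R d) \<bullet> (y - ?t *\<^sub>R d) = y \<bullet> y - 2 * ?t * (d \<bullet> y) + ?t^2 * (d \<bullet> d)"
    by (simp add: inner_diff_left inner_diff_right inner_commute algebra_simps power2_eq_square)
  also have "\<dots> = (norm y)^2 - 2 * ?t^2 + ?t^2 * (norm d)^2"
    unfolding dy by (simp add: dot_square_norm power2_eq_square)
  also have "\<dots> = (norm y)^2 * ((norm d)^2 - 1)"
  proof -
    have t2: "?t^2 = (norm y)^2" by (simp add: power_mult_distrib k1)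
    show ?thesis unfolding t2 by (simp add: algebra_simps)
  qed
  also have "\<dots> \<le> 0"
  proof -
    have "(norm d)^2 \<le> 1" using d1 by (simp add: abs_square_le_1)
    then show ?thesis by (simp add: mult_nonneg_nonpos)
  qed
  finally have "(y - ?t *\<^sub>R d) \<bullet> (y - ?t *\<^sub>R d) \<le> 0" .
  then have "y - ?t *\<^sub>R d = 0" by (metis inner_eq_zero_iff inner_ge_zero order_antisym)
  then show ?thesis by simp
qed

lemma hle:
  assumes "c^2 \<le> r^2" "s^2 \<le> 1" "r \<ge> 0"
  shows "sqrt ((r^2 - c^2) * (1 - s^2)) - c * s \<le> r"
proof -
  let ?m = "sqrt (1 - s^2)" and ?b = "sqrt (r^2 - c^2)"
  have msq: "?m^2 = 1 - s^2" by (rule real_sqrt_pow2) (use assms in auto)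
  have bsq: "?b^2 = r^2 - c^2" by (rule real_sqrt_pow2) (use assms in auto)
  have "(?b * ?m - c * s)^2 = (?b^2 + c^2) * (?m^2 + s^2) - (?b * s + c * ?m)^2"
    by (simp add: power2_eq_square algebra_simps)
  also have "\<dots> \<le> (?b^2 + c^2) * (?m^2 + s^2)" by simp
  also have "\<dots> = r^2" using msq bsq by simp
  finally have "?b * ?m - c * s \<le> r" using assms(3) by (rule power2_le_imp_le)
  then show ?thesis by (simp add: real_sqrt_mult)
qed


lemma hderiv:
  fixes d y0 :: "real^'m"
  assumes Q0: "((y0 \<bullet> y0) - (d \<bullet> y0) * (d \<bullet> y0)) * (1 - s^2) > 0"
  shows "((\<lambda>y. sqrt (((y \<bullet> y) - (d \<bullet> y) * (d \<bullet> y)) * (1 - s^2)) - (d \<bullet> y) * s) has_derivative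
     (\<lambda>v. (2 * (y0 \<bullet> v) - 2 * (d \<bullet> y0) * (d \<bullet> v)) * (1 - s^2) * (inverse (sqrt (((y0 \<bullet> y0) - (d \<bullet> y0) * (d \<bullet> y0)) * (1 - s^2))) / 2) - (d \<bullet> v) * s)) (at y0)"
  apply (rule has_derivative_eq_rhs)
   apply (rule derivative_intros has_derivative_real_sqrt Q0)+
  apply (rule ext)
  apply (simp add: algebra_simps inner_commute)
  done

lemma lin_deriv:
  fixes d y0 :: "real^'m"
  shows "((\<lambda>y. - ((d \<bullet> y) * s)) has_derivative (\<lambda>v. - ((d \<bullet> v) * s))) (at y0)"
  apply (rule has_derivative_eq_rhs)
   apply (rule derivative_intros)+
  apply (rule ext)
  apply (simp add: algebra_simps inner_commute)
  done

lemma W_diff: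
  fixes d y0 :: "real^'m"
  assumes d1: "norm d \<le> 1" and s1: "s^2 \<le> 1" and y0: "y0 \<noteq> 0"
    and H: "norm d = 1 \<Longrightarrow> y0 = norm y0 *\<^sub>R d \<Longrightarrow> (\<forall>y::real^'m. y \<bullet> y = (d \<bullet> y) * (d \<bullet> y))"
  shows "(\<lambda>y. V s (norm y) (d \<bullet> y)) differentiable (at y0)"
proof -
  define W where "W = (\<lambda>y::real^'m. V s (norm y) (d \<bullet> y))"
  define h where "h = (\<lambda>y::real^'m. sqrt (((y \<bullet> y) - (d \<bullet> y) * (d \<bullet> y)) * (1 - s^2)) - (d \<bullet> y) * s)"
  define g where "g = (\<lambda>y::real^'m. s * norm y + d \<bullet> y)"
  have hV: "W y = (if g y \<le> 0 then norm y else h y)" for y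
    unfolding W_def h_def g_def V_def by (simp add: dot_square_norm power2_eq_square)
  have cr: "(d \<bullet> y)^2 \<le> (norm y)^2" for y
  proof -
    have "\<bar>d \<bullet> y\<bar> \<le> norm d * norm y" by (rule Cauchy_Schwarz_ineq2)
    also have "\<dots> \<le> norm y" using d1 by (simp add: mult_left_le_one_le)
    finally show ?thesis by (rule absle_sq)
  qed
  have hle': "h y \<le> norm y" for y
  proof -
    have "h y = sqrt (((norm y)^2 - (d \<bullet> y)^2) * (1 - s^2)) - (d \<bullet> y) * s"
      by (simp add: h_def dot_square_norm power2_eq_square)
    also have "\<dots> \<le> norm y" by (rule hle[OF cr s1 norm_ge_zero])
    finally show ?thesis .
  qed
  have Wle: "W y \<le> norm y" and hW: "h y \<le> W y" for y using hV[of y] hle'[of y] by auto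
  have r0: "norm y0 > 0" using y0 by simp
  have sle1: "s \<le> 1" using s1 by (simp add: abs_square_le_1)
  have gc: "(g \<longlongrightarrow> g y0) (at y0)" unfolding g_def by (intro tendsto_intros)
  have dn: "(norm has_derivative (\<lambda>v. v \<bullet> sgn y0)) (at y0)" using has_derivative_norm[OF y0] by simp
  have "\<exists>D. (W has_derivative D) (at y0)"
  proof -
    consider (a) "g y0 < 0" | (b) "g y0 > 0" | (c) "g y0 = 0" by linarith
    then show ?thesis
    proof cases
      case a
      have ev: "eventually (\<lambda>y. g y < 0) (at y0)" using order_tendstoD(2)[OF gc a] .
      have evW: "eventually (\<lambda>y. norm y \<le> W y \<and> W y \<le> norm y) (at y0)"
        using ev by eventually_elim (simp add: hV)
      have Wy0: "W y0 = norm y0" using a hV by simp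
      show ?thesis using squeeze_deriv[OF dn dn evW Wy0[symmetric] Wy0[symmetric]] by blast
    next
      case b
      have ev: "eventually (\<lambda>y. g y > 0) (at y0)" using order_tendstoD(1)[OF gc b] .
      have evW: "eventually (\<lambda>y. h y \<le> W y \<and> W y \<le> h y) (at y0)"
        using ev by eventually_elim (simp add: hV)
      have Wy0: "W y0 = h y0" using b hV by simp
      obtain D where dh: "(h has_derivative D) (at y0)"
      proof (cases "((y0 \<bullet> y0) - (d \<bullet> y0) * (d \<bullet> y0)) * (1 - s^2) > 0")
        case True then show ?thesis using hderiv[OF True] that unfolding h_def by blast
      next
        case False
        have z: "\<forall>y. ((y \<bullet> y) - (d \<bullet> y) * (d \<bullet> y)) * (1 - s^2) = 0"
        proof (cases "s^2 = 1")
          case True then show ?thesis by simp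
        next
          case False2: False
          have sl: "1 - s^2 > 0" using s1 False2 by simp
          have q0: "(y0 \<bullet> y0) - (d \<bullet> y0) * (d \<bullet> y0) \<le> 0" using False sl
            by (metis mult_pos_pos not_le)
          have "(d \<bullet> y0)^2 = (norm y0)^2" using q0 cr[of y0] by (simp add: dot_square_norm power2_eq_square)
          then have "d \<bullet> y0 = norm y0 \<or> d \<bullet> y0 = - norm y0" by (simp add: power2_eq_iff)
          moreover have "d \<bullet> y0 \<noteq> - norm y0"
          proof
            assume "d \<bullet> y0 = - norm y0"
            then have "g y0 = (s - 1) * norm y0" by (simp add: g_def algebra_simps)
            also have "\<dots> \<le> 0" using sle1 r0 by (simp add: mult_nonpos_nonneg)
            finally show False using b by simp
          qed
          ultimately have c0: "d \<bullet> y0 = 1 * norm y0" by auto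
          have yd: "y0 = (1 * norm y0) *\<^sub>R d" by (rule CS_eq[OF d1 c0]) simp
          then have "norm y0 = norm y0 * norm d" by (metis mult_1 norm_scaleR abs_of_nonneg norm_ge_zero)
          then have "norm d = 1" using r0 by simp
          then have "\<forall>y. y \<bullet> y = (d \<bullet> y) * (d \<bullet> y)" using H yd by simp
          then show ?thesis by simp
        qed
        have "h = (\<lambda>y. - ((d \<bullet> y) * s))" unfolding h_def using z by (simp add: fun_eq_iff)
        then show ?thesis using lin_deriv that by metis
      qed
      show ?thesis using squeeze_deriv[OF dh dh evW Wy0[symmetric] Wy0[symmetric]] by blast
    next
      case c
      have c0: "d \<bullet> y0 = - s * norm y0" using c by (simp add: g_def algebra_simps)
      have Wy0: "W y0 = norm y0" using c hV by simp
      have s1': "1 - s^2 \<ge> 0" using s1 by simp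
      have Q: "((y0 \<bullet> y0) - (d \<bullet> y0) * (d \<bullet> y0)) * (1 - s^2) = (norm y0 * (1 - s^2))^2"
        unfolding c0 by (simp add: dot_square_norm power2_eq_square algebra_simps)
      have sq: "sqrt (((y0 \<bullet> y0) - (d \<bullet> y0) * (d \<bullet> y0)) * (1 - s^2)) = norm y0 * (1 - s^2)"
        unfolding Q using s1' by simp
      have hy0: "h y0 = W y0" unfolding Wy0 h_def sq unfolding c0 by (simp add: algebra_simps power2_eq_square)
      have evW: "eventually (\<lambda>y. h y \<le> W y \<and> W y \<le> norm y) (at y0)"
        using hW Wle by (simp add: always_eventually)
      have dh: "(h has_derivative (\<lambda>v. v \<bullet> sgn y0)) (at y0)"
      proof (cases "s^2 = 1")
        case False
        have sl: "1 - s^2 > 0" using s1 False by simp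
        have Q0: "((y0 \<bullet> y0) - (d \<bullet> y0) * (d \<bullet> y0)) * (1 - s^2) > 0" unfolding Q using r0 sl by simp
        show ?thesis unfolding h_def
        proof (rule has_derivative_eq_rhs[OF hderiv[OF Q0]])
          show "(\<lambda>v. (2 * (y0 \<bullet> v) - 2 * (d \<bullet> y0) * (d \<bullet> v)) * (1 - s^2) * (inverse (sqrt (((y0 \<bullet> y0) - (d \<bullet> y0) * (d \<bullet> y0)) * (1 - s^2))) / 2) - (d \<bullet> v) * s)
            = (\<lambda>v. v \<bullet> sgn y0)"
          proof
            fix v :: "real^'m"
            have "(2 * (y0 \<bullet> v) - 2 * (d \<bullet> y0) * (d \<bullet> v)) * (1 - s^2) * (inverse (norm y0 * (1 - s^2)) / 2) - (d \<bullet> v) * s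
                = (y0 \<bullet> v) / norm y0"
              unfolding c0 using r0 sl by (simp add: field_simps)
            moreover have "v \<bullet> sgn y0 = (y0 \<bullet> v) / norm y0"
              by (simp add: sgn_div_norm inner_commute field_simps)
            ultimately show "(2 * (y0 \<bullet> v) - 2 * (d \<bullet> y0) * (d \<bullet> v)) * (1 - s^2) * (inverse (sqrt (((y0 \<bullet> y0) - (d \<bullet> y0) * (d \<bullet> y0)) * (1 - s^2))) / 2) - (d \<bullet> v) * s
              = v \<bullet> sgn y0" unfolding sq by simp
          qed
        qed
      next
        case True
        have hl: "h = (\<lambda>y. - ((d \<bullet> y) * s))" unfolding h_def using True by (simp add: fun_eq_iff)
        have yd: "y0 = (- s * norm y0) *\<^sub>R d" by (rule CS_eq[OF d1 c0]) (use True in simp)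
        have "(\<lambda>v. - ((d \<bullet> v) * s)) = (\<lambda>v. v \<bullet> sgn y0)"
        proof
          fix v :: "real^'m"
          have "v \<bullet> sgn y0 = (v \<bullet> y0) / norm y0" by (simp add: sgn_div_norm field_simps)
          also have "\<dots> = - ((d \<bullet> v) * s)" using r0
            by (subst yd) (simp add: inner_commute)
          finally show "- ((d \<bullet> v) * s) = v \<bullet> sgn y0" by simp
        qed
        then show ?thesis unfolding hl using lin_deriv by metis
      qed
      show ?thesis using squeeze_deriv[OF dh dn evW hy0 Wy0[symmetric]] by blast
    qed
  qed
  then show ?thesis unfolding W_def differentiable_def by blast
qed


lemma one_dim:
  fixes d y :: "real^'m"
  assumes c: "CARD('m) \<le> 1" and d1: "norm d = 1"
  shows "y \<bullet> y = (d \<bullet> y) * (d \<bullet> y)"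
proof -
  obtain i :: 'm where True by simp
  have "\<forall>a\<in>(UNIV::'m set). \<forall>b\<in>UNIV. a = b" using c card_le_Suc0_iff_eq[of "UNIV::'m set"] by simp
  then have U: "(UNIV::'m set) = {i}" by auto
  have dd: "d \<bullet> d = 1" using d1 by (rule inner_self_1)
  have e1: "y \<bullet> y = y$i * y$i" and e2: "d \<bullet> y = d$i * y$i" and e3: "d \<bullet> d = d$i * d$i"
    by (simp_all add: inner_vec_def U)
  show ?thesis using dd unfolding e1 e2 e3 by (simp add: algebra_simps)
qed

theorem proposition5:
  fixes lam a :: "real ^ 'n" and d :: "real ^ 'm"
  assumes "norm lam = 1" and "norm a = 1" and "norm d \<le> 1"
  shows "(\<forall>y. phi lam a d y =
            (if (lam \<bullet> a) * norm y + d \<bullet> y \<le> 0 then norm y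
             else sqrt ((norm y ^ 2 - (d \<bullet> y) ^ 2) * (1 - (lam \<bullet> a) ^ 2)) - (d \<bullet> y) * (lam \<bullet> a)))
       \<and> convex_on UNIV (phi lam a d)
       \<and> (\<forall>t y. t > 0 \<longrightarrow> phi lam a d (t *\<^sub>R y) = t * phi lam a d y)
       \<and> (if norm d = 1 \<and> CARD('m) > 1
          then (\<forall>y. y \<notin> {t *\<^sub>R d | t. t \<ge> 0} \<longrightarrow> phi lam a d differentiable (at y))
          else (\<forall>y. y \<noteq> 0 \<longrightarrow> phi lam a d differentiable (at y)))"
proof -
  define s where "s = lam \<bullet> a"
  have s1: "s^2 \<le> 1" unfolding s_def by (rule s_sq_le1[OF assms(1,2)])
  have pe: "phi lam a d = (\<lambda>y. V s (norm y) (d \<bullet> y))"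
    using phi_eq[OF assms] unfolding s_def by (simp add: fun_eq_iff)
  have P1: "\<forall>y. phi lam a d y =
            (if (lam \<bullet> a) * norm y + d \<bullet> y \<le> 0 then norm y
             else sqrt ((norm y ^ 2 - (d \<bullet> y) ^ 2) * (1 - (lam \<bullet> a) ^ 2)) - (d \<bullet> y) * (lam \<bullet> a))"
    using phi_eq[OF assms] by (simp add: V_def)
  have P2: "convex_on UNIV (phi lam a d)" unfolding pe by (rule W_convex[OF assms(3) s1])
  have P3: "\<forall>t y. t > 0 \<longrightarrow> phi lam a d (t *\<^sub>R y) = t * phi lam a d y"
  proof (intro allI impI)
    fix t :: real and y :: "real^'m" assume t: "t > 0"
    have "V s (norm (t *\<^sub>R y)) (d \<bullet> (t *\<^sub>R y)) = V s (t * norm y) (t * (d \<bullet> y))"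
      using t by simp
    also have "\<dots> = t * V s (norm y) (d \<bullet> y)" by (rule V_homog[OF t])
    finally show "phi lam a d (t *\<^sub>R y) = t * phi lam a d y" unfolding pe .
  qed
  have P4: "if norm d = 1 \<and> CARD('m) > 1
          then (\<forall>y. y \<notin> {t *\<^sub>R d | t. t \<ge> 0} \<longrightarrow> phi lam a d differentiable (at y))
          else (\<forall>y. y \<noteq> 0 \<longrightarrow> phi lam a d differentiable (at y))"
  proof (cases "norm d = 1 \<and> CARD('m) > 1")
    case True
    have "phi lam a d differentiable (at y)" if y: "y \<notin> {t *\<^sub>R d | t. t \<ge> 0}" for y
    proof -
      have y0: "y \<noteq> 0" using y by (metis (mono_tags, lifting) mem_Collect_eq order_refl scaleR_zero_left)
      have "\<not> (y = norm y *\<^sub>R d)" using y by auto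
      then show ?thesis unfolding pe using W_diff[OF assms(3) s1 y0] by blast
    qed
    then show ?thesis using True by simp
  next
    case False
    have B: "\<forall>y. y \<noteq> 0 \<longrightarrow> phi lam a d differentiable (at y)"
    proof (intro allI impI)
      fix y :: "real^'m" assume y0: "y \<noteq> 0"
      have H: "\<forall>y::real^'m. y \<bullet> y = (d \<bullet> y) * (d \<bullet> y)" if "norm d = 1"
        using False that one_dim[of d] by simp
      show "phi lam a d differentiable (at y)" unfolding pe using W_diff[OF assms(3) s1 y0] H by blast
    qed
    show ?thesis using B by (simp only: False if_False)
  qed
  show ?thesis using P1 P2 P3 P4 by blast
qed

end
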